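(* Let $p$ be an odd prime and $\alpha>1$ an integer with $\gcd(p,\alpha)=1$, let $\gamma=\operatorname{ord}_p(\alpha)$, and let $\tau>0$ be the integer with $p^{\tau}\,\|\,\alpha^\gamma-1$. Then for every integer $k\geq 0$, $$\left\{c_{\tau, k}\big((\alpha^b)_p\big) \;\middle|\; 0\leq b < \gamma p^k \right\} = \Lambda_k .$$
   Context: $p^k\,\|\, n$ means $p^k\mid n$ and $p^{k+1}\nmid n$. For a nonnegative integer $m$, $(m)_p$ denotes its base-$p$ representation $m=\sum_{i\ge0}a_ip^i$ with $0\le a_i<p$, viewed as an infinite digit sequence $(a_i)_{i\ge0}$ (padded with zeros). For such a digit sequence $a=(a_i)$ and integers $\tau\ge1,k\ge0$, define $c_{\tau,k}(a)=\langle a_{\tau+k-1},\dots,a_{\tau+1},a_\tau,a_0\rangle$ (a tuple of length $k+1$: the digits in positions $\tau+k-1$ down to $\tau$, followed by the digit in position $0$). Let $\delta=\{\alpha^j \bmod p : j\in\mathbb{Z}\}$ be the set of residues in $\{0,\dots,p-1\}$ generated by $\alpha$ modulo $p$. $\Lambda_k$ is the set of tuples $\langle \sigma_k,\sigma_{k-1},\dots,\sigma_1,\sigma_0\rangle$ with $\sigma_0\in\delta$ and $0\le\sigma_i<p$ integers for $1\le i\le k$. *)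

theory Defs
  imports "HOL-Number_Theory.Number_Theory"
begin

definition digit :: "nat \<Rightarrow> nat \<Rightarrow> nat \<Rightarrow> nat" where
  "digit p m i = (m div p ^ i) mod p"

definition c_tuple :: "nat \<Rightarrow> nat \<Rightarrow> nat \<Rightarrow> nat \<Rightarrow> nat list" where
  "c_tuple p \<tau> k m = map (\<lambda>j. digit p m (\<tau> + k - 1 - j)) [0..<k] @ [digit p m 0]"

text \<open>delta = residues of powers of alpha mod p (alpha is a unit mod p, so
  nonnegative exponents already give all integer powers).\<close>
definition delta :: "nat \<Rightarrow> nat \<Rightarrow> nat set" where
  "delta p \<alpha> = {\<alpha> ^ j mod p | j. True}"

definition Lambda :: "nat \<Rightarrow> nat \<Rightarrow> nat \<Rightarrow> nat list set" where
  "Lambda p \<alpha> k = {xs. length xs = k + 1 \<and> last xs \<in> delta p \<alpha> \<and> (\<forall>i<k. xs ! i < p)}"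

end

theory Submission
  imports Defs
begin

lemma sq_lemma: "((x::int) - 1)^2 dvd x^i - 1 - int i * (x - 1)"
proof (induction i)
  case 0 then show ?case by simp
next
  case (Suc i)
  then obtain z where z: "x^i - 1 - int i * (x - 1) = (x-1)^2 * z" by blast
  have "x^Suc i - 1 - int (Suc i) * (x - 1) = x * (x^i - 1 - int i * (x - 1)) + int i * (x-1)^2"
    by (simp add: algebra_simps power2_eq_square)
  also have "\<dots> = (x-1)^2 * (x*z + int i)" unfolding z by (simp add: algebra_simps)
  finally show ?case by simp
qed

lemma gauss2: "2 * (\<Sum>i<n. i) = n * (n - 1::nat)"
proof (induction n)
  case (Suc n)
  have "2 * (\<Sum>i<Suc n. i) = 2 * (\<Sum>i<n. i) + 2 * n" by simp
  also have "\<dots> = Suc n * (Suc n - 1)" using Suc by (cases n) auto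
  finally show ?case .
qed simp

lemma sum_lemma:
  fixes x :: int and p :: nat
  assumes "odd p"
  shows "\<exists>h z. (\<Sum>i<p. x^i) = int p + (x - 1) * int p * h + (x-1)^2 * z"
proof -
  obtain h where h: "p = 2*h + 1" using assms oddE by blast
  have g: "(\<Sum>i<p. int i) = int p * int h"
  proof -
    have "2 * (\<Sum>i<p. i) = p * (p - 1)"
      by (rule gauss2)
    hence "(\<Sum>i<p. i) = p * h" using h by simp
    hence "int (\<Sum>i<p. i) = int p * int h" by simp
    thus ?thesis by simp
  qed
  have "\<forall>i. \<exists>z. x^i - 1 - int i * (x - 1) = (x-1)^2 * z" using sq_lemma by (meson dvdE)
  then obtain Z where Z: "\<And>i. x^i - 1 - int i * (x - 1) = (x-1)^2 * Z i" by metis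
  have "(\<Sum>i<p. x^i) = (\<Sum>i<p. 1 + int i * (x - 1) + (x-1)^2 * Z i)"
    by (rule sum.cong) (auto simp: Z[symmetric])
  also have "\<dots> = (\<Sum>i<p. 1) + (\<Sum>i<p. int i * (x-1)) + (\<Sum>i<p. (x-1)^2 * Z i)"
    by (simp only: sum.distrib)
  also have "\<dots> = int p + (x-1) * (\<Sum>i<p. int i) + (x-1)^2 * (\<Sum>i<p. Z i)"
    by (simp add: sum_distrib_left sum_distrib_right mult.commute)
  also have "\<dots> = int p + (x - 1) * int p * int h + (x-1)^2 * (\<Sum>i<p. Z i)"
    by (simp add: g)
  finally show ?thesis by blast
qed

lemma lte_step:
  fixes x :: int and p t :: nat
  assumes p: "prime p" "odd p" and t: "t \<ge> 1"
    and d: "int p ^ t dvd x - 1" and nd: "\<not> int p ^ (t+1) dvd x - 1"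
  shows "int p ^ (t+1) dvd x^p - 1 \<and> \<not> int p ^ (t+2) dvd x^p - 1"
proof -
  define P where "P = int p"
  have Pp: "prime P" using p by (simp add: P_def)
  obtain a where a: "x - 1 = P^t * a" using d P_def by (auto elim: dvdE)
  have na: "\<not> P dvd a"
  proof
    assume "P dvd a" then obtain b where "a = P * b" by blast
    hence "x - 1 = P^(t+1) * b" using a by (simp add: algebra_simps)
    thus False using nd P_def by simp
  qed
  obtain h z where hz: "(\<Sum>i<p. x^i) = P + (x - 1) * P * h + (x-1)^2 * z"
    using sum_lemma[OF p(2), of x] P_def by blast
  have "P dvd x - 1" using a t by (simp add: dvd_power_le)
  then obtain w where w: "x - 1 = P * w" by blast
  have S: "(\<Sum>i<p. x^i) = P * (1 + P * (w*h + w*w*z))"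
    using hz w by (simp add: algebra_simps power2_eq_square)
  define c where "c = 1 + P * (w*h + w*w*z)"
  have nc: "\<not> P dvd c"
  proof
    assume "P dvd c" hence "P dvd 1" unfolding c_def by (simp add: dvd_add_left_iff)
    thus False using Pp not_prime_unit by blast
  qed
  have eq: "x^p - 1 = P^(t+1) * (a * c)"
    using power_diff_1_eq[of x p] a S c_def by (simp add: algebra_simps)
  have "\<not> P dvd a * c" using na nc Pp by (simp add: prime_dvd_mult_iff)
  hence "\<not> P^(t+2) dvd x^p - 1"
    using eq Pp by (simp add: power_add)
  thus ?thesis using eq P_def by simp
qed

lemma lte_iter:
  fixes x :: int and p t :: nat
  assumes p: "prime p" "odd p" and t: "t \<ge> 1"
    and d: "int p ^ t dvd x - 1" and nd: "\<not> int p ^ (t+1) dvd x - 1"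
  shows "int p ^ (t+j) dvd x^(p^j) - 1 \<and> \<not> int p ^ (t+j+1) dvd x^(p^j) - 1"
proof (induction j)
  case 0 then show ?case using d nd by simp
next
  case (Suc j)
  have e: "x^(p^Suc j) = (x^(p^j))^p" by (simp add: power_mult[symmetric] mult.commute)
  show ?case using lte_step[OF p, of "t+j" "x^(p^j)"] Suc t unfolding e by simp
qed

lemma unit_lemma:
  fixes y :: int and p u e :: nat
  assumes p: "prime p" and nu: "\<not> p dvd u" and y: "int p dvd y - 1"
    and h: "int p ^ e dvd y^u - 1"
  shows "int p ^ e dvd y - 1"
proof -
  have c1: "[y = 1] (mod int p)" using y by (simp add: cong_iff_dvd_diff)
  have "[(\<Sum>i<u. y^i) = (\<Sum>i<u. 1)] (mod int p)"
    by (rule cong_sum) (metis c1 cong_pow power_one)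
  hence c2: "[(\<Sum>i<u. y^i) = int u] (mod int p)" by simp
  have "\<not> int p dvd (\<Sum>i<u. y^i)"
  proof
    assume "int p dvd (\<Sum>i<u. y^i)"
    hence "int p dvd int u" using c2 by (metis cong_dvd_iff)
    thus False using nu by simp
  qed
  hence "coprime (int p) (\<Sum>i<u. y^i)" using p
    by (simp add: prime_imp_coprime)
  hence "coprime (int p ^ e) (\<Sum>i<u. y^i)" by simp
  moreover have "int p ^ e dvd (y - 1) * (\<Sum>i<u. y^i)" using h power_diff_1_eq[of y u] by simp
  ultimately show ?thesis using coprime_dvd_mult_left_iff by blast
qed

lemma digits_mod:
  fixes p m m' t k :: nat
  assumes "m mod p^t = m' mod p^t"
    and "\<And>i. t \<le> i \<Longrightarrow> i < t + k \<Longrightarrow> digit p m i = digit p m' i"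
  shows "m mod p^(t+k) = m' mod p^(t+k)"
  using assms(2)
proof (induction k)
  case 0 then show ?case using assms(1) by simp
next
  case (Suc k)
  have pe: "p^(t + Suc k) = p^(t+k) * p" by simp
  have "m mod p^(t + Suc k) = p^(t+k) * digit p m (t+k) + m mod p^(t+k)"
    unfolding pe by (simp only: mod_mult2_eq digit_def)
  moreover have "m' mod p^(t + Suc k) = p^(t+k) * digit p m' (t+k) + m' mod p^(t+k)"
    unfolding pe by (simp only: mod_mult2_eq digit_def)
  ultimately show ?case using Suc by simp
qed

lemma main_inj:
  fixes p \<alpha> \<tau> k d :: nat
  assumes p: "prime p" "odd p" and cop: "coprime p \<alpha>" and tau: "\<tau> > 0"
    and h1: "p ^ \<tau> dvd \<alpha> ^ ord p \<alpha> - 1"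
    and h2: "\<not> p ^ (\<tau> + 1) dvd \<alpha> ^ ord p \<alpha> - 1"
    and dl: "d < ord p \<alpha> * p ^ k"
    and c: "[\<alpha>^d = 1] (mod p^(\<tau>+k))"
  shows "d = 0"
proof (rule ccontr)
  assume d0: "d \<noteq> 0"
  define g where "g = ord p \<alpha>"
  have pd: "p dvd p^(\<tau>+k)" using tau by (simp add: dvd_power)
  have "[\<alpha>^d = 1] (mod p)" using cong_dvd_modulus_nat[OF c pd] .
  hence "g dvd d" unfolding g_def by (rule iffD1[OF ord_divides])
  then obtain m where m: "d = g * m" by blast
  have mk: "m < p^k" using dl m unfolding g_def by simp
  have m0: "m \<noteq> 0" using m d0 by auto
  obtain u where u: "m = p ^ multiplicity p m * u" "\<not> p dvd u"
    using multiplicity_decompose'[OF m0, of p] p(1) by (metis not_prime_unit)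
  define j where "j = multiplicity p m"
  have "p^j dvd m" using u(1) unfolding j_def by (metis dvd_triv_left)
  hence "p^j \<le> m" using m0 by (simp add: dvd_imp_le)
  hence "p^j < p^k" using mk by simp
  moreover have "1 < p" using p(1) prime_gt_1_nat by blast
  ultimately have jk: "j < k" using power_less_imp_less_exp by blast
  define X where "X = int (\<alpha>^g)"
  have a0: "\<alpha> \<noteq> 0"
  proof
    assume "\<alpha> = 0" hence "p = 1" using cop by simp
    thus False using p(1) by simp
  qed
  have ag: "\<alpha>^g \<ge> 1" using a0 by (simp add: Suc_le_eq)
  have X1: "X - 1 = int (\<alpha>^g - 1)" using ag X_def by simp
  have d1: "int p ^ \<tau> dvd X - 1" unfolding X1 using h1 g_def
    by (metis of_nat_dvd_iff of_nat_power)
  have d2: "\<not> int p ^ (\<tau>+1) dvd X - 1" unfolding X1 using h2 g_def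
    by (metis of_nat_dvd_iff of_nat_power)
  define Y where "Y = X^(p^j)"
  have it: "int p ^ (\<tau>+j) dvd Y - 1 \<and> \<not> int p ^ (\<tau>+j+1) dvd Y - 1"
    using lte_iter[OF p, of \<tau> X j] tau d1 d2 Y_def by simp
  have YX: "Y^u = int (\<alpha>^d)" unfolding Y_def X_def m u(1)[folded j_def]
    by (simp add: power_mult)
  have "[int (\<alpha>^d) = int 1] (mod int (p^(\<tau>+k)))" using c by (simp only: cong_int_iff)
  hence "int p^(\<tau>+k) dvd Y^u - 1" unfolding YX by (simp add: cong_iff_dvd_diff)
  hence "int p^(\<tau>+j+1) dvd Y^u - 1"
  proof -
    have "int p^(\<tau>+j+1) dvd int p^(\<tau>+k)" using jk by (intro le_imp_power_dvd) simp
    thus ?thesis using \<open>int p^(\<tau>+k) dvd Y^u - 1\<close> by (rule dvd_trans)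
  qed
  moreover have "int p dvd Y - 1"
  proof -
    have "int p dvd int p^(\<tau>+j)" using tau by (simp add: dvd_power)
    thus ?thesis using it by (meson dvd_trans)
  qed
  ultimately have "int p^(\<tau>+j+1) dvd Y - 1" using unit_lemma[OF p(1) u(2)] by blast
  thus False using it by simp
qed

lemma inj_aux:
  fixes p \<alpha> \<tau> k b b' :: nat
  assumes p: "prime p" "odd p" and cop: "coprime p \<alpha>" and tau: "\<tau> > 0"
    and h1: "p ^ \<tau> dvd \<alpha> ^ ord p \<alpha> - 1"
    and h2: "\<not> p ^ (\<tau> + 1) dvd \<alpha> ^ ord p \<alpha> - 1"
    and bb: "b \<le> b'" and bl: "b' < ord p \<alpha> * p ^ k"
    and eq: "c_tuple p \<tau> k (\<alpha>^b) = c_tuple p \<tau> k (\<alpha>^b')"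
  shows "b = b'"
proof -
  define g where "g = ord p \<alpha>"
  have a0: "\<alpha> \<noteq> 0"
  proof
    assume "\<alpha> = 0" hence "p = 1" using cop by simp
    thus False using p(1) by simp
  qed
  from eq have e1: "map (\<lambda>j. digit p (\<alpha>^b) (\<tau> + k - 1 - j)) [0..<k] = map (\<lambda>j. digit p (\<alpha>^b') (\<tau> + k - 1 - j)) [0..<k]"
    and e2: "digit p (\<alpha>^b) 0 = digit p (\<alpha>^b') 0"
    unfolding c_tuple_def by simp_all
  from e2 have "[\<alpha>^b' = \<alpha>^b] (mod p)" by (simp add: digit_def cong_def)
  hence "[b' = b] (mod g)" unfolding g_def by (rule iffD1[OF order_divides_expdiff[OF cop]])
  then obtain q where q: "b' = b + g * q" using cong_le_nat[OF bb] by (metis mult.commute add.commute)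
  have "[\<alpha>^g = 1] (mod p^\<tau>)" using h1 g_def a0
    by (subst cong_altdef_nat) (simp_all add: Suc_le_eq)
  hence "[(\<alpha>^g)^q = 1] (mod p^\<tau>)" by (metis cong_pow power_one)
  hence "[\<alpha>^b * (\<alpha>^g)^q = \<alpha>^b * 1] (mod p^\<tau>)" by (rule cong_scalar_left)
  hence "[\<alpha>^b' = \<alpha>^b] (mod p^\<tau>)" by (simp add: q power_add power_mult)
  hence m1: "\<alpha>^b' mod p^\<tau> = \<alpha>^b mod p^\<tau>" by (simp add: cong_def)
  have dg: "digit p (\<alpha>^b') i = digit p (\<alpha>^b) i" if "\<tau> \<le> i" "i < \<tau> + k" for i
  proof -
    define j where "j = \<tau> + k - 1 - i"
    have jk: "j < k" using that j_def by simp
    have ij: "\<tau> + k - 1 - j = i" using that j_def by simp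
    have "digit p (\<alpha>^b) (\<tau> + k - 1 - j) = digit p (\<alpha>^b') (\<tau> + k - 1 - j)"
      using e1 jk by auto
    thus ?thesis using ij by simp
  qed
  have "\<alpha>^b' mod p^(\<tau>+k) = \<alpha>^b mod p^(\<tau>+k)"
    by (rule digits_mod[OF m1 dg])
  hence "[\<alpha>^b * \<alpha>^(b'-b) = \<alpha>^b * 1] (mod p^(\<tau>+k))"
    using bb by (simp add: cong_def power_add[symmetric])
  moreover have "coprime (\<alpha>^b) (p^(\<tau>+k))" using cop by (simp add: coprime_commute)
  ultimately have "[\<alpha>^(b'-b) = 1] (mod p^(\<tau>+k))" by (simp only: cong_mult_lcancel_nat)
  moreover have dl: "b' - b < ord p \<alpha> * p ^ k" using bl by simp
  ultimately have "b' - b = 0" using main_inj[OF p cop tau h1 h2 dl] by blast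
  thus ?thesis using bb by simp
qed

theorem theorem2p3:
  fixes p \<alpha> \<tau> k :: nat
  assumes "prime p" and "odd p" and "\<alpha> > 1" and "coprime p \<alpha>"
    and "\<tau> > 0"
    and "p ^ \<tau> dvd \<alpha> ^ ord p \<alpha> - 1"
    and "\<not> p ^ (\<tau> + 1) dvd \<alpha> ^ ord p \<alpha> - 1"
  shows "{c_tuple p \<tau> k (\<alpha> ^ b) | b. b < ord p \<alpha> * p ^ k} = Lambda p \<alpha> k"
proof -
  note p = assms(1,2) and cop = assms(4) and tau = assms(5) and h1 = assms(6) and h2 = assms(7)
  define g where "g = ord p \<alpha>"
  define N where "N = g * p^k"
  define f where "f = (\<lambda>b. c_tuple p \<tau> k (\<alpha>^b))"
  have p0: "p > 0" using p(1) prime_gt_0_nat by blast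
  have g0: "g > 0" using cop g_def by simp
  have L: "{c_tuple p \<tau> k (\<alpha> ^ b) | b. b < ord p \<alpha> * p ^ k} = f ` {..<N}"
    unfolding f_def N_def g_def by auto
  have inj: "inj_on f {..<N}"
  proof (rule inj_onI)
    fix b b' assume b: "b \<in> {..<N}" and b': "b' \<in> {..<N}" and e: "f b = f b'"
    show "b = b'"
    proof (cases "b \<le> b'")
      case True thus ?thesis using inj_aux[OF p cop tau h1 h2 True, of k] b' e
        unfolding f_def N_def g_def by simp
    next
      case False hence le: "b' \<le> b" by simp
      show ?thesis using inj_aux[OF p cop tau h1 h2 le, of k] b e
        unfolding f_def N_def g_def by simp
    qed
  qed
  have cardI: "card (f ` {..<N}) = N" using inj by (simp add: card_image)
  have sub: "f ` {..<N} \<subseteq> Lambda p \<alpha> k"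
  proof
    fix xs assume "xs \<in> f ` {..<N}"
    then obtain b where xs: "xs = c_tuple p \<tau> k (\<alpha>^b)" unfolding f_def by blast
    have "length xs = k + 1" unfolding xs c_tuple_def by simp
    moreover have "last xs \<in> delta p \<alpha>" unfolding xs c_tuple_def delta_def digit_def by auto
    moreover have "\<forall>i<k. xs ! i < p" unfolding xs c_tuple_def digit_def using p0
      by (simp add: nth_append)
    ultimately show "xs \<in> Lambda p \<alpha> k" unfolding Lambda_def by simp
  qed
  define A where "A = {xs. set xs \<subseteq> {..<p} \<and> length xs = k} \<times> ((\<lambda>j. \<alpha>^j mod p) ` {..<g})"
  have LA: "Lambda p \<alpha> k \<subseteq> (\<lambda>(xs,s). xs @ [s]) ` A"
  proof
    fix xs assume xs: "xs \<in> Lambda p \<alpha> k"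
    hence len: "length xs = k + 1" and la: "last xs \<in> delta p \<alpha>" and lt: "\<forall>i<k. xs ! i < p"
      unfolding Lambda_def by auto
    have ne: "xs \<noteq> []" using len by auto
    have "set (butlast xs) \<subseteq> {..<p}"
    proof
      fix y assume "y \<in> set (butlast xs)"
      then obtain i where i: "i < length (butlast xs)" "y = butlast xs ! i" by (metis in_set_conv_nth)
      hence "y = xs ! i" by (simp add: nth_butlast)
      thus "y \<in> {..<p}" using lt i len by simp
    qed
    moreover have "length (butlast xs) = k" using len by simp
    moreover have "last xs \<in> (\<lambda>j. \<alpha>^j mod p) ` {..<g}"
    proof -
      obtain j where j: "last xs = \<alpha>^j mod p" using la unfolding delta_def by blast
      have "[j = j mod g] (mod g)" by (simp add: cong_def)
      hence "[\<alpha>^j = \<alpha>^(j mod g)] (mod p)" unfolding g_def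
        by (rule iffD2[OF order_divides_expdiff[OF cop]])
      hence "last xs = \<alpha>^(j mod g) mod p" using j by (simp add: cong_def)
      moreover have "j mod g < g" using g0 by simp
      ultimately show ?thesis by blast
    qed
    ultimately have "(butlast xs, last xs) \<in> A" unfolding A_def by simp
    moreover have "xs = (\<lambda>(xs,s). xs @ [s]) (butlast xs, last xs)" using ne by simp
    ultimately show "xs \<in> (\<lambda>(xs,s). xs @ [s]) ` A" by blast
  qed
  have finA: "finite A" unfolding A_def by (simp add: finite_lists_length_eq)
  have "card A \<le> p^k * g"
  proof -
    have "card ((\<lambda>j. \<alpha>^j mod p) ` {..<g}) \<le> g" using card_image_le[of "{..<g}"] by simp
    hence "card A \<le> card {xs. set xs \<subseteq> {..<p} \<and> length xs = k} * g"
      unfolding A_def card_cartesian_product by simp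
    thus ?thesis by (simp add: card_lists_length_eq)
  qed
  moreover have "card (Lambda p \<alpha> k) \<le> card A"
    using card_mono[OF finite_imageI[OF finA] LA] card_image_le[OF finA, of "\<lambda>(xs,s). xs @ [s]"] by linarith
  ultimately have cL: "card (Lambda p \<alpha> k) \<le> N" unfolding N_def by (simp add: mult.commute)
  have finL: "finite (Lambda p \<alpha> k)" using LA finA finite_subset by blast
  have "card (f ` {..<N}) \<le> card (Lambda p \<alpha> k)" using card_mono[OF finL sub] .
  hence "f ` {..<N} = Lambda p \<alpha> k" using card_subset_eq[OF finL sub] cL cardI by simp
  thus ?thesis using L by simp
qed

end
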